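(* Let $m,n$ be positive integers and let $f$ be a non-constant function of $x$. Then \[ \partial^{-n}f\partial^{-m}= \begin{cases} (\partial^{-n}f)\partial^{-m}+\text{lower}, & n<m,\\ (\partial^{-n}f)\partial^{-n}+(-1)^n\partial^{-n}(\partial^{-n}f)+\text{lower}, & n=m,\\ (-1)^m\partial^{-n}(\partial^{-m}f)+\text{lower}, & n>m, \end{cases} \] where "lower" denotes nonlocal terms of lower order of nonlocality.
   Context: $\partial=\partial/\partial x$ and $\partial^{-1}$ is a formal inverse of $\partial$; operators are pseudo-differential operators in $\partial$. In the formulas, $(\partial^{-k}f)$ denotes the function obtained by applying $\partial^{-k}$ to $f$, regarded as a multiplication operator. An operator has order of nonlocality $k$ if its most negative power of $\partial$ (in the form $\sum_\alpha a_\alpha\partial^{-k}b_\alpha$ plus terms with $\partial^{-j}$, $j<k$, and local terms) is $\partial^{-k}$. *)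

theory Defs
  imports Main
begin

text \<open>An operator is its coefficient function: P s is the coefficient of the
  power \<partial>^s (s an integer); only operators with support bounded above occur.\<close>

type_synonym 'a pdo = "int \<Rightarrow> 'a"

definition derivation :: "('a::comm_ring_1 \<Rightarrow> 'a) \<Rightarrow> bool" where
  "derivation D \<longleftrightarrow> (\<forall>a b. D (a + b) = D a + D b \<and> D (a * b) = D a * b + a * D b)"

text \<open>Binomial coefficient (-j choose k) for j >= 1.\<close>
definition negbinom :: "nat \<Rightarrow> nat \<Rightarrow> int" where
  "negbinom j k = (-1) ^ k * int ((j + k - 1) choose k)"

text \<open>The operator a \<partial>^{-j} b (a, b multiplication operators), expanded in the
  pseudo-differential algebra: \<partial>^{-j} b = sum_k (-j choose k) (D^k b) \<partial>^{-j-k}.\<close>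
definition nlterm :: "('a::comm_ring_1 \<Rightarrow> 'a) \<Rightarrow> 'a \<Rightarrow> nat \<Rightarrow> 'a \<Rightarrow> 'a pdo" where
  "nlterm D a j b = (\<lambda>s. if s \<le> - int j
      then of_int (negbinom j (nat (- int j - s))) * a * (D ^^ nat (- int j - s)) b
      else 0)"

text \<open>Right composition with \<partial>^q: (P \<partial>^q) has coefficient P (s - q) at \<partial>^s.\<close>
definition rcomp_pow :: "'a pdo \<Rightarrow> int \<Rightarrow> 'a pdo" where
  "rcomp_pow P q = (\<lambda>s. P (s - q))"

definition lower_nonlocal :: "('a::comm_ring_1 \<Rightarrow> 'a) \<Rightarrow> nat \<Rightarrow> 'a pdo \<Rightarrow> bool" where
  "lower_nonlocal D k L \<longleftrightarrow>
     (\<exists>(N::nat) (a::nat \<Rightarrow> 'a) (b::nat \<Rightarrow> 'a) (j::nat \<Rightarrow> nat).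
        (\<forall>i<N. 1 \<le> j i \<and> j i < k) \<and>
        L = (\<lambda>s. \<Sum>i<N. nlterm D (a i) (j i) (b i) s))"

end

theory Submission
  imports Defs
begin

definition E :: "('a::comm_ring_1 \<Rightarrow> 'a) \<Rightarrow> nat \<Rightarrow> nat \<Rightarrow> 'a \<Rightarrow> 'a pdo" where
  "E D n m g = rcomp_pow (nlterm D 1 n g) (- int m)"

lemma negbinom_rec: "negbinom (Suc a) k = negbinom a (Suc k) - negbinom (Suc a) (Suc k)"
proof -
  have "(Suc (a + k) choose Suc k) = (a + k choose k) + (a + k choose Suc k)"
    by simp
  then show ?thesis unfolding negbinom_def by (simp add: algebra_simps)
qed

lemma negbinom_0: "negbinom j 0 = 1" unfolding negbinom_def by simp

lemma negbinom_0_Suc: "negbinom 0 (Suc k) = 0" unfolding negbinom_def by simp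

lemma deriv_0: assumes "derivation D" shows "D 0 = 0"
proof -
  have "D (0+0) = D 0 + D 0" using assms unfolding derivation_def by blast
  then show ?thesis by simp
qed

lemma deriv_1: assumes "derivation D" shows "D 1 = 0"
proof -
  have "D (1*1) = D 1 * 1 + 1 * D 1" using assms unfolding derivation_def by blast
  then show ?thesis by simp
qed

lemma deriv_pow_1: assumes "derivation D" shows "(D ^^ Suc k) 1 = 0"
  using assms by (induction k) (auto simp: deriv_0 deriv_1)

lemma deriv_pow_1': assumes "derivation D" shows "D ((D ^^ k) 1) = 0"
  using deriv_pow_1[OF assms, of k] by simp

lemma E_0: assumes "derivation D" shows "E D 0 m G = nlterm D G m 1"
proof
  fix s
  show "E D 0 m G s = nlterm D G m 1 s"
  proof (cases "s \<le> - int m")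
    case True
    define k where "k = nat (- int m - s)"
    have k: "s = - int m - int k" using True unfolding k_def by simp
    show ?thesis
    proof (cases k)
      case 0 then show ?thesis using k unfolding E_def rcomp_pow_def nlterm_def
        by (simp add: negbinom_0)
    next
      case (Suc k') then show ?thesis using k assms unfolding E_def rcomp_pow_def nlterm_def
        by (simp add: negbinom_0_Suc deriv_pow_1' nat_add_distrib)
    qed
  next
    case False then show ?thesis unfolding E_def rcomp_pow_def nlterm_def by simp
  qed
qed

lemma E_m0: "E D n 0 G = nlterm D 1 n G"
  unfolding E_def rcomp_pow_def by simp

lemma E_rec:
  assumes "D G = g"
  shows "E D (Suc n) (Suc m) g = (\<lambda>s. E D n (Suc m) G s - E D (Suc n) m G s)"
proof
  fix s
  show "E D (Suc n) (Suc m) g s = E D n (Suc m) G s - E D (Suc n) m G s"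
  proof (cases "s \<le> - int (Suc n) - int (Suc m)")
    case True
    define k where "k = nat (- int (Suc n) - int (Suc m) - s)"
    have k: "s = - int (Suc n) - int (Suc m) - int k" using True unfolding k_def by simp
    have n1: "nat (- int (Suc n) - (s + int (Suc m))) = k" using k by simp
    have n2: "nat (- int n - (s + int (Suc m))) = Suc k" using k by simp
    have n3: "nat (- int (Suc n) - (s + int m)) = Suc k" using k by simp
    have dd: "(D ^^ Suc k) G = (D ^^ k) g" using assms by (simp add: funpow_swap1)
    show ?thesis unfolding E_def rcomp_pow_def nlterm_def
      using k n1 n2 n3 dd by (simp add: negbinom_rec[of n k] algebra_simps)
  next
    case False
    show ?thesis
    proof (cases "s = 1 - int (Suc n) - int (Suc m)")
      case True
      have n2: "nat (- int n - (s + int (Suc m))) = 0" using True by simp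
      have n3: "nat (- int (Suc n) - (s + int m)) = 0" using True by simp
      show ?thesis unfolding E_def rcomp_pow_def nlterm_def using True n2 n3
        by (simp add: negbinom_0)
    next
      case F2: False
      show ?thesis unfolding E_def rcomp_pow_def nlterm_def using False F2 by simp
    qed
  qed
qed

lemma lnl_zero: "lower_nonlocal D k (\<lambda>s. 0)"
  unfolding lower_nonlocal_def by (rule exI[of _ 0]) simp

lemma sum_split_aux: "(\<Sum>i<N1+N2. h i) = (\<Sum>i<N1. h i) + (\<Sum>i<N2. h (N1 + i))"
  for h :: "nat \<Rightarrow> 'b::comm_monoid_add"
  by (induction N2) (simp_all add: algebra_simps)

lemma lnl_add:
  fixes D :: "'a::comm_ring_1 \<Rightarrow> 'a"
  assumes "lower_nonlocal D k L1" "lower_nonlocal D k L2"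
  shows "lower_nonlocal D k (\<lambda>s. L1 s + L2 s)"
proof -
  obtain N1 and a1 b1 :: "nat \<Rightarrow> 'a" and j1 where 1: "\<forall>i<N1. 1 \<le> j1 i \<and> j1 i < k"
    "L1 = (\<lambda>s. \<Sum>i<N1. nlterm D (a1 i) (j1 i) (b1 i) s)"
    using assms(1) unfolding lower_nonlocal_def by blast
  obtain N2 and a2 b2 :: "nat \<Rightarrow> 'a" and j2 where 2: "\<forall>i<N2. 1 \<le> j2 i \<and> j2 i < k"
    "L2 = (\<lambda>s. \<Sum>i<N2. nlterm D (a2 i) (j2 i) (b2 i) s)"
    using assms(2) unfolding lower_nonlocal_def by blast
  define a where "a i = (if i < N1 then a1 i else a2 (i - N1))" for i
  define b where "b i = (if i < N1 then b1 i else b2 (i - N1))" for i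
  define j where "j i = (if i < N1 then j1 i else j2 (i - N1))" for i
  have "\<forall>i<N1+N2. 1 \<le> j i \<and> j i < k"
  proof (intro allI impI)
    fix i assume i: "i < N1 + N2"
    show "1 \<le> j i \<and> j i < k"
    proof (cases "i < N1")
      case True then show ?thesis using 1(1) unfolding j_def by simp
    next
      case False
      then have "i - N1 < N2" using i by linarith
      then show ?thesis using 2(1) False unfolding j_def by simp
    qed
  qed
  moreover have "(\<lambda>s. L1 s + L2 s) = (\<lambda>s. \<Sum>i<N1+N2. nlterm D (a i) (j i) (b i) s)"
  proof
    fix s
    have A: "(\<Sum>i<N1. nlterm D (a i) (j i) (b i) s) = (\<Sum>i<N1. nlterm D (a1 i) (j1 i) (b1 i) s)"
      by (rule sum.cong) (simp_all add: a_def b_def j_def)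
    have B: "(\<Sum>i<N2. nlterm D (a (N1+i)) (j (N1+i)) (b (N1+i)) s) = (\<Sum>i<N2. nlterm D (a2 i) (j2 i) (b2 i) s)"
      by (rule sum.cong) (simp_all add: a_def b_def j_def)
    show "L1 s + L2 s = (\<Sum>i<N1+N2. nlterm D (a i) (j i) (b i) s)"
      unfolding sum_split_aux[of _ N1 N2] A B 1 2 by simp
  qed
  ultimately show ?thesis unfolding lower_nonlocal_def
    by (intro exI[of _ "N1+N2"] exI[of _ a] exI[of _ b] exI[of _ j] conjI)
qed

lemma nlterm_neg: "nlterm D (- a) j b s = - nlterm D a j b s"
  unfolding nlterm_def by simp

lemma lnl_neg:
  fixes D :: "'a::comm_ring_1 \<Rightarrow> 'a"
  assumes "lower_nonlocal D k L"
  shows "lower_nonlocal D k (\<lambda>s. - L s)"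
proof -
  obtain N and a b :: "nat \<Rightarrow> 'a" and j where 1: "\<forall>i<N. 1 \<le> j i \<and> j i < k"
    "L = (\<lambda>s. \<Sum>i<N. nlterm D (a i) (j i) (b i) s)"
    using assms unfolding lower_nonlocal_def by blast
  have "(\<lambda>s. - L s) = (\<lambda>s. \<Sum>i<N. nlterm D (- a i) (j i) (b i) s)"
    unfolding 1 nlterm_neg sum_negf by simp
  then show ?thesis using 1(1) unfolding lower_nonlocal_def
    by (intro exI[of _ N] exI[of _ "\<lambda>i. - a i"] exI[of _ b] exI[of _ j] conjI)
qed

lemma lnl_mono: "lower_nonlocal D k L \<Longrightarrow> k \<le> k' \<Longrightarrow> lower_nonlocal D k' L"
  unfolding lower_nonlocal_def by (elim exE conjE, intro exI conjI) (auto intro: order_less_le_trans)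

lemma lnl_single: "1 \<le> j \<Longrightarrow> j < k \<Longrightarrow> lower_nonlocal D k (nlterm D a j b)"
  unfolding lower_nonlocal_def
  by (rule exI[of _ 1], rule exI[of _ "\<lambda>_. a"], rule exI[of _ "\<lambda>_. b"], rule exI[of _ "\<lambda>_. j"]) simp

context
  fixes D :: "'a::comm_ring_1 \<Rightarrow> 'a" and F :: "nat \<Rightarrow> 'a"
  assumes der: "derivation D" and FD: "\<forall>k. D (F (Suc k)) = F k"
begin

lemma E_recF: "E D (Suc n) (Suc m) (F p) = (\<lambda>s. E D n (Suc m) (F (Suc p)) s - E D (Suc n) m (F (Suc p)) s)"
  by (rule E_rec) (use FD in simp)

lemma lnl_any: "0 < n + m \<Longrightarrow> lower_nonlocal D (Suc (max n m)) (E D n m (F p))"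
proof (induction "n + m" arbitrary: n m p rule: less_induct)
  case less
  show ?case
  proof (cases n)
    case 0
    then show ?thesis using less.prems by (simp add: E_0[OF der] lnl_single)
  next
    case (Suc n')
    show ?thesis
    proof (cases m)
      case 0
      then show ?thesis using Suc by (simp add: E_m0 lnl_single)
    next
      case (Suc m')
      have 1: "lower_nonlocal D (Suc (max n m)) (E D n' (Suc m') (F (Suc p)))"
        using \<open>n = Suc n'\<close> Suc
        by (intro lnl_mono[OF less.hyps[of n' "Suc m'" "Suc p"]]) auto
      have 2: "lower_nonlocal D (Suc (max n m)) (E D (Suc n') m' (F (Suc p)))"
        using \<open>n = Suc n'\<close> Suc
        by (intro lnl_mono[OF less.hyps[of "Suc n'" m' "Suc p"]]) auto
      show ?thesis unfolding \<open>n = Suc n'\<close> Suc E_recF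
        using lnl_add[OF 1 lnl_neg[OF 2]] \<open>n = Suc n'\<close> Suc by simp
    qed
  qed
qed


lemma case_lt: "n < m \<Longrightarrow> \<exists>L. lower_nonlocal D m L \<and>
   E D n m (F p) = (\<lambda>s. nlterm D (F (p + n)) m 1 s + L s)"
proof (induction n arbitrary: p)
  case 0
  show ?case by (intro exI[of _ "\<lambda>s. 0"] conjI lnl_zero) (simp add: E_0[OF der])
next
  case (Suc n)
  obtain m' where m: "m = Suc m'" using Suc.prems by (cases m) auto
  obtain L where L: "lower_nonlocal D m L" "E D n m (F (Suc p)) = (\<lambda>s. nlterm D (F (Suc p + n)) m 1 s + L s)"
    using Suc.IH[of "Suc p"] Suc.prems by auto
  have 2: "lower_nonlocal D m (E D (Suc n) m' (F (Suc p)))"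
    using Suc.prems m by (intro lnl_mono[OF lnl_any]) auto
  have "E D (Suc n) m (F p) = (\<lambda>s. nlterm D (F (p + Suc n)) m 1 s + (L s + - E D (Suc n) m' (F (Suc p)) s))"
    unfolding m E_recF using L(2) m by (simp add: algebra_simps)
  then show ?case using lnl_add[OF L(1) lnl_neg[OF 2]] by blast
qed

lemma case_gt: "m < n \<Longrightarrow> \<exists>L. lower_nonlocal D n L \<and>
   E D n m (F p) = (\<lambda>s. (-1) ^ m * nlterm D 1 n (F (p + m)) s + L s)"
proof (induction m arbitrary: p)
  case 0
  show ?case by (intro exI[of _ "\<lambda>s. 0"] conjI lnl_zero) (simp add: E_m0)
next
  case (Suc m)
  obtain n' where n: "n = Suc n'" using Suc.prems by (cases n) auto
  obtain L where L: "lower_nonlocal D n L" "E D n m (F (Suc p)) = (\<lambda>s. (-1) ^ m * nlterm D 1 n (F (Suc p + m)) s + L s)"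
    using Suc.IH[of "Suc p"] Suc.prems by auto
  have 1: "lower_nonlocal D n (E D n' (Suc m) (F (Suc p)))"
    using Suc.prems n by (intro lnl_mono[OF lnl_any]) auto
  have "E D n (Suc m) (F p) = (\<lambda>s. (-1) ^ Suc m * nlterm D 1 n (F (p + Suc m)) s + (E D n' (Suc m) (F (Suc p)) s + - L s))"
    unfolding n E_recF using L(2) n by (simp add: algebra_simps)
  then show ?case using lnl_add[OF 1 lnl_neg[OF L(1)]] by blast
qed

lemma case_eq: "0 < n \<Longrightarrow> \<exists>L. lower_nonlocal D n L \<and>
   E D n n (F p) = (\<lambda>s. nlterm D (F (p + n)) n 1 s + (-1) ^ n * nlterm D 1 n (F (p + n)) s + L s)"
proof -
  assume "0 < n"
  then obtain n' where n: "n = Suc n'" by (cases n) auto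
  obtain L1 where L1: "lower_nonlocal D n L1" "E D n' n (F (Suc p)) = (\<lambda>s. nlterm D (F (Suc p + n')) n 1 s + L1 s)"
    using case_lt[of n' n "Suc p"] n by auto
  obtain L2 where L2: "lower_nonlocal D n L2" "E D n n' (F (Suc p)) = (\<lambda>s. (-1) ^ n' * nlterm D 1 n (F (Suc p + n')) s + L2 s)"
    using case_gt[of n' n "Suc p"] n by auto
  have "E D n n (F p) = (\<lambda>s. nlterm D (F (p + n)) n 1 s + (-1) ^ n * nlterm D 1 n (F (p + n)) s + (L1 s + - L2 s))"
    using L1(2) L2(2) n unfolding n E_recF by (simp add: algebra_simps)
  then show ?thesis using lnl_add[OF L1(1) lnl_neg[OF L2(1)]] by blast
qed

end

theorem mainTheorem4:
  fixes D :: "'a::comm_ring_1 \<Rightarrow> 'a" and f :: 'a and F :: "nat \<Rightarrow> 'a" and n m :: nat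
  assumes "derivation D"
    and "0 < n" and "0 < m"
    and "D f \<noteq> 0"
    and "F 0 = f" and "\<forall>k. D (F (Suc k)) = F k"
  shows "\<exists>L. lower_nonlocal D (max n m) L \<and>
    rcomp_pow (nlterm D 1 n f) (- int m) =
      (\<lambda>s. (if n < m then nlterm D (F n) m 1 s
            else if n = m then nlterm D (F n) n 1 s + (-1) ^ n * nlterm D 1 n (F n) s
            else (-1) ^ m * nlterm D 1 n (F m) s) + L s)"
proof -
  have e: "rcomp_pow (nlterm D 1 n f) (- int m) = E D n m (F 0)"
    unfolding E_def using assms(5) by simp
  consider "n < m" | "n = m" | "m < n" by linarith
  then show ?thesis
  proof cases
    case 1
    then obtain L where "lower_nonlocal D m L" "E D n m (F 0) = (\<lambda>s. nlterm D (F (0 + n)) m 1 s + L s)"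
      using case_lt[OF assms(1) assms(6), of n m 0] by blast
    then show ?thesis using 1 e by (intro exI[of _ L]) (simp add: max_def)
  next
    case 2
    then obtain L where "lower_nonlocal D n L" "E D n n (F 0) = (\<lambda>s. nlterm D (F (0 + n)) n 1 s + (-1) ^ n * nlterm D 1 n (F (0 + n)) s + L s)"
      using case_eq[OF assms(1) assms(6), of n 0] assms(2) by blast
    then show ?thesis using 2 e by (intro exI[of _ L]) simp
  next
    case 3
    then obtain L where "lower_nonlocal D n L" "E D n m (F 0) = (\<lambda>s. (-1) ^ m * nlterm D 1 n (F (0 + m)) s + L s)"
      using case_gt[OF assms(1) assms(6), of m n 0] by blast
    then show ?thesis using 3 e by (intro exI[of _ L]) (simp add: max_def)
  qed
qed

end
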